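(* In the setting where $\hat U,\tilde U:(0,1]\to GL_n(\mathbb F)$ ($\mathbb F\in\{\mathbb R,\mathbb C\}$) are continuous, $\hat U$ contracts the algebra with structure constants $c^k_{ij}$ to the algebra with structure constants $\hat c^k_{ij}$, and $\tilde U$ contracts the latter to the algebra with structure constants $\tilde c^k_{ij}$: if each function $\tilde g^{k'i''j''}_{i'j'k''}(\tilde\varepsilon)=(\tilde U_{\tilde\varepsilon})^{i''}_{i'}(\tilde U_{\tilde\varepsilon})^{j''}_{j'}(\tilde U^{-1}_{\tilde\varepsilon})^{k'}_{k''}$ is bounded as $\tilde\varepsilon\to0^+$, then $U_{\hat\varepsilon,\tilde\varepsilon}=\hat U_{\hat\varepsilon}\tilde U_{\tilde\varepsilon}$ gives a two-parametric contraction, i.e. $\lim_{(\hat\varepsilon,\tilde\varepsilon)\to(0^+,0^+)}(U)^i_{i'}(U)^j_{j'}(U^{-1})^{k'}_kc^k_{ij}=\tilde c^{k'}_{i'j'}$ for all indices.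
   Context: A continuous $U:(0,1]\to GL_n(\mathbb F)$ contracts the algebra with structure constants $c^k_{ij}$ (in a fixed basis) to the algebra with structure constants $c'^{k'}_{i'j'}$ if $\lim_{\varepsilon\to0^+}(U_\varepsilon)^i_{i'}(U_\varepsilon)^j_{j'}(U^{-1}_\varepsilon)^{k'}_kc^k_{ij}=c'^{k'}_{i'j'}$ for all indices (summation over repeated indices). *)

theory Defs
  imports "HOL-Analysis.Analysis"
begin

text \<open>Structure constants in a fixed basis indexed by the finite type 'n:
  c i j k stands for c^k_{ij}.  A matrix U :: 'a^'n^'n has entries U $ r $ s,
  r = upper (row) index, s = lower (column) index, i.e. (U)^r_s = U $ r $ s.\<close>

type_synonym ('a, 'n) struct_consts = "'n \<Rightarrow> 'n \<Rightarrow> 'n \<Rightarrow> 'a"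

definition transformed_sc ::
  "('a::real_normed_field)^'n^'n \<Rightarrow> ('a, 'n::finite) struct_consts \<Rightarrow> 'n \<Rightarrow> 'n \<Rightarrow> 'n \<Rightarrow> 'a" where
  "transformed_sc U c i' j' k' =
     (\<Sum>i\<in>UNIV. \<Sum>j\<in>UNIV. \<Sum>k\<in>UNIV.
        U $ i $ i' * U $ j $ j' * matrix_inv U $ k' $ k * c i j k)"

definition contracts ::
  "(real \<Rightarrow> ('a::real_normed_field)^'n^'n) \<Rightarrow> ('a, 'n::finite) struct_consts
     \<Rightarrow> ('a, 'n) struct_consts \<Rightarrow> bool" where
  "contracts U c c' \<longleftrightarrow>
     continuous_on {0<..1} U \<and> (\<forall>\<epsilon>\<in>{0<..1}. invertible (U \<epsilon>)) \<and>
     (\<forall>i' j' k'. ((\<lambda>\<epsilon>. transformed_sc (U \<epsilon>) c i' j' k') \<longlongrightarrow> c' i' j' k') (at_right 0))"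

end

theory Submission
  imports Defs
begin

lemma minv_props:
  fixes A :: "'a::field^'n::finite^'n"
  assumes "invertible A"
  shows "A ** matrix_inv A = mat 1" "matrix_inv A ** A = mat 1"
proof -
  have "\<exists>A'. A ** A' = mat 1 \<and> A' ** A = mat 1" using assms unfolding invertible_def by blast
  hence "A ** matrix_inv A = mat 1 \<and> matrix_inv A ** A = mat 1"
    unfolding matrix_inv_def by (rule someI_ex)
  thus "A ** matrix_inv A = mat 1" "matrix_inv A ** A = mat 1" by auto
qed

lemma minv_unique:
  fixes M X :: "'a::field^'n::finite^'n"
  assumes "invertible M" "M ** X = mat 1"
  shows "matrix_inv M = X"
proof -
  have "matrix_inv M = matrix_inv M ** (M ** X)" using assms(2) by (simp add: matrix_mul_rid)
  also have "\<dots> = (matrix_inv M ** M) ** X" by (simp add: matrix_mul_assoc)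
  also have "\<dots> = X" using minv_props[OF assms(1)] by (simp add: matrix_mul_lid)
  finally show ?thesis .
qed

lemma minv_mult:
  fixes A B :: "'a::field^'n::finite^'n"
  assumes "invertible A" "invertible B"
  shows "matrix_inv (A ** B) = matrix_inv B ** matrix_inv A"
proof (rule minv_unique)
  show "invertible (A ** B)" using assms by (rule invertible_mult)
  have "(A ** B) ** (matrix_inv B ** matrix_inv A) = A ** (B ** matrix_inv B) ** matrix_inv A"
    by (simp add: matrix_mul_assoc)
  also have "\<dots> = mat 1" using minv_props[OF assms(1)] minv_props[OF assms(2)]
    by (simp add: matrix_mul_rid)
  finally show "(A ** B) ** (matrix_inv B ** matrix_inv A) = mat 1" .
qed

lemma sum3: "(\<Sum>i\<in>(UNIV::'a::finite set). \<Sum>j\<in>(UNIV::'b::finite set). \<Sum>k\<in>(UNIV::'c::finite set). H i j k) = (\<Sum>(i,j,k)\<in>UNIV. H i j k :: 'd::comm_monoid_add)"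
  by (simp add: sum.cartesian_product flip: UNIV_Times_UNIV)
lemma swap6: fixes G :: "'a::finite \<Rightarrow> 'b::finite \<Rightarrow> 'c::finite \<Rightarrow> 'd::finite \<Rightarrow> 'e::finite \<Rightarrow> 'f::finite \<Rightarrow> 'g::comm_monoid_add"
 shows "(\<Sum>i\<in>UNIV. \<Sum>j\<in>UNIV. \<Sum>k\<in>UNIV. \<Sum>a\<in>UNIV. \<Sum>b\<in>UNIV. \<Sum>d\<in>UNIV. G i j k a b d)
   = (\<Sum>a\<in>UNIV. \<Sum>b\<in>UNIV. \<Sum>d\<in>UNIV. \<Sum>i\<in>UNIV. \<Sum>j\<in>UNIV. \<Sum>k\<in>UNIV. G i j k a b d)"
proof -
  have e1: "\<And>i j k. (\<Sum>a\<in>UNIV. \<Sum>b\<in>UNIV. \<Sum>d\<in>UNIV. G i j k a b d) = (\<Sum>(a,b,d)\<in>UNIV. G i j k a b d)"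
    by (rule sum3)
  have e2: "\<And>a b d. (\<Sum>i\<in>UNIV. \<Sum>j\<in>UNIV. \<Sum>k\<in>UNIV. G i j k a b d) = (\<Sum>(i,j,k)\<in>UNIV. G i j k a b d)"
    by (rule sum3)
  have "(\<Sum>i\<in>UNIV. \<Sum>j\<in>UNIV. \<Sum>k\<in>UNIV. \<Sum>a\<in>UNIV. \<Sum>b\<in>UNIV. \<Sum>d\<in>UNIV. G i j k a b d)
    = (\<Sum>(i,j,k)\<in>UNIV. \<Sum>(a,b,d)\<in>UNIV. G i j k a b d)" 
    unfolding e1 by (rule sum3)
  also have "\<dots> = (\<Sum>(a,b,d)\<in>UNIV. \<Sum>(i,j,k)\<in>UNIV. G i j k a b d)"
    unfolding case_prod_unfold by (rule sum.swap)
  also have "\<dots> = (\<Sum>a\<in>UNIV. \<Sum>b\<in>UNIV. \<Sum>d\<in>UNIV. \<Sum>i\<in>UNIV. \<Sum>j\<in>UNIV. \<Sum>k\<in>UNIV. G i j k a b d)"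
    unfolding e2 by (rule sum3[symmetric])
  finally show ?thesis .
qed
lemma prod3:
  fixes f g h :: "'i \<Rightarrow> 'a::comm_ring_1"
  shows "sum f A * sum g B * sum h C * x = (\<Sum>a\<in>A. \<Sum>b\<in>B. \<Sum>d\<in>C. f a * g b * h d * x)"
proof -
  have "sum f A * sum g B * sum h C * x = (\<Sum>a\<in>A. f a * (sum g B * sum h C * x))"
    by (simp add: sum_distrib_right mult.assoc)
  also have "\<dots> = (\<Sum>a\<in>A. \<Sum>b\<in>B. f a * g b * (sum h C * x))"
    by (intro sum.cong refl) (simp add: sum_distrib_left sum_distrib_right mult.assoc sum.swap[of _ C B])
  also have "\<dots> = (\<Sum>a\<in>A. \<Sum>b\<in>B. \<Sum>d\<in>C. f a * g b * h d * x)"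
    by (intro sum.cong refl) (simp add: sum_distrib_left sum_distrib_right mult.assoc)
  finally show ?thesis .
qed

lemma compose_sc:
  fixes A B :: "'a::real_normed_field^'n::finite^'n"
  assumes "invertible A" "invertible B"
  shows "transformed_sc (A ** B) c i' j' k' =
    (\<Sum>i''\<in>UNIV. \<Sum>j''\<in>UNIV. \<Sum>k''\<in>UNIV.
        B $ i'' $ i' * B $ j'' $ j' * matrix_inv B $ k' $ k'' * transformed_sc A c i'' j'' k'')"
proof -
  define G where "G = (\<lambda>i j k a b d. A $ i $ a * B $ a $ i' * (A $ j $ b * B $ b $ j') *
     (matrix_inv B $ k' $ d * matrix_inv A $ d $ k) * c i j k)"
  have inv: "\<And>k. matrix_inv (A ** B) $ k' $ k = (\<Sum>d\<in>UNIV. matrix_inv B $ k' $ d * matrix_inv A $ d $ k)"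
    unfolding minv_mult[OF assms] by (simp add: matrix_matrix_mult_def)
  have AB: "\<And>i l. (A ** B) $ i $ l = (\<Sum>a\<in>UNIV. A $ i $ a * B $ a $ l)"
    by (simp add: matrix_matrix_mult_def)
  have "transformed_sc (A ** B) c i' j' k' =
     (\<Sum>i\<in>UNIV. \<Sum>j\<in>UNIV. \<Sum>k\<in>UNIV. \<Sum>a\<in>UNIV. \<Sum>b\<in>UNIV. \<Sum>d\<in>UNIV. G i j k a b d)"
    unfolding transformed_sc_def inv AB G_def prod3
    by (simp add: mult_ac)
  also have "\<dots> = (\<Sum>a\<in>UNIV. \<Sum>b\<in>UNIV. \<Sum>d\<in>UNIV. \<Sum>i\<in>UNIV. \<Sum>j\<in>UNIV. \<Sum>k\<in>UNIV. G i j k a b d)"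
    by (rule swap6)
  also have "\<dots> = (\<Sum>i''\<in>UNIV. \<Sum>j''\<in>UNIV. \<Sum>k''\<in>UNIV.
        B $ i'' $ i' * B $ j'' $ j' * matrix_inv B $ k' $ k'' * transformed_sc A c i'' j'' k'')"
    unfolding transformed_sc_def G_def
    by (simp add: sum_distrib_left mult_ac)
  finally show ?thesis .
qed


lemma tendsto_sum_prod_zero:
  fixes g :: "'i \<Rightarrow> 'x \<Rightarrow> 'a::real_normed_field"
  assumes "\<And>q. Bfun (g q) G" "\<And>q. (d q \<longlongrightarrow> 0) F" "finite Q"
  shows "((\<lambda>(x, y). \<Sum>q\<in>Q. g q y * d q x) \<longlongrightarrow> 0) (F \<times>\<^sub>F G)"
proof -
  have "((\<lambda>p. \<Sum>q\<in>Q. g q (snd p) * d q (fst p)) \<longlongrightarrow> (\<Sum>q\<in>Q. 0)) (F \<times>\<^sub>F G)"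
  proof (rule tendsto_sum)
    fix q assume "q \<in> Q"
    have B: "Bfun (\<lambda>p. g q (snd p)) (F \<times>\<^sub>F G)"
    proof -
      obtain K where "K > 0" "eventually (\<lambda>y. norm (g q y) \<le> K) G"
        using assms(1)[of q] unfolding Bfun_def by blast
      hence "eventually (\<lambda>p. norm (g q (snd p)) \<le> K) (F \<times>\<^sub>F G)"
        using eventually_compose_filterlim[OF _ filterlim_snd] by blast
      thus ?thesis unfolding Bfun_def using \<open>K > 0\<close> by blast
    qed
    have Z: "((\<lambda>p. d q (fst p)) \<longlongrightarrow> 0) (F \<times>\<^sub>F G)"
      using assms(2)[of q] filterlim_fst[of F G] by (rule tendsto_compose_filtermap[THEN iffD1] | metis filterlim_compose)
    show "((\<lambda>p. g q (snd p) * d q (fst p)) \<longlongrightarrow> 0) (F \<times>\<^sub>F G)"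
      using bounded_bilinear.Bfun_prod_Zfun[OF bounded_bilinear_mult B Z[unfolded tendsto_Zfun_iff]]
      by (simp add: tendsto_Zfun_iff)
  qed
  thus ?thesis by (simp add: case_prod_unfold)
qed

theorem mainTheorem10:
  fixes Uh Ut :: "real \<Rightarrow> ('a::real_normed_field)^'n::finite^'n"
    and c ch ct :: "('a, 'n) struct_consts"
  assumes "contracts Uh c ch"
    and "contracts Ut ch ct"
    and "\<And>i' j' k'' k' i'' j''.
           Bfun (\<lambda>\<epsilon>. Ut \<epsilon> $ i'' $ i' * Ut \<epsilon> $ j'' $ j' * matrix_inv (Ut \<epsilon>) $ k' $ k'')
                (at_right 0)"
  shows "\<forall>i' j' k'.
           ((\<lambda>(eh, et). transformed_sc (Uh eh ** Ut et) c i' j' k') \<longlongrightarrow> ct i' j' k')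
             (at_right 0 \<times>\<^sub>F at_right 0)"
proof (intro allI)
  fix i' j' k'
  let ?F = "at_right (0::real) \<times>\<^sub>F at_right (0::real)"
  define g where "g = (\<lambda>(q::'n\<times>'n\<times>'n) et. Ut et $ fst q $ i' * Ut et $ fst (snd q) $ j' *
       matrix_inv (Ut et) $ k' $ snd (snd q))"
  define d where "d = (\<lambda>(q::'n\<times>'n\<times>'n) eh. transformed_sc (Uh eh) c (fst q) (fst (snd q)) (snd (snd q))
       - ch (fst q) (fst (snd q)) (snd (snd q)))"
  have invh: "\<forall>\<epsilon>\<in>{0<..1}. invertible (Uh \<epsilon>)" and invt: "\<forall>\<epsilon>\<in>{0<..1}. invertible (Ut \<epsilon>)"
    and limh: "\<And>i j k. ((\<lambda>\<epsilon>. transformed_sc (Uh \<epsilon>) c i j k) \<longlongrightarrow> ch i j k) (at_right 0)"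
    and limt: "\<And>i j k. ((\<lambda>\<epsilon>. transformed_sc (Ut \<epsilon>) ch i j k) \<longlongrightarrow> ct i j k) (at_right 0)"
    using assms(1,2) unfolding contracts_def by auto
  have ev01: "eventually (\<lambda>x::real. x \<in> {0<..1}) (at_right 0)"
    by (simp add: eventually_at_right_field) (auto intro!: exI[of _ 1])
  have evF: "eventually (\<lambda>(eh, et). transformed_sc (Uh eh ** Ut et) c i' j' k' =
      transformed_sc (Ut et) ch i' j' k' + (\<Sum>q\<in>UNIV. g q et * d q eh)) ?F"
  proof (rule eventually_prod_filter[THEN iffD2], intro exI conjI)
    show "eventually (\<lambda>x::real. x \<in> {0<..1}) (at_right 0)" by (rule ev01)
    show "eventually (\<lambda>x::real. x \<in> {0<..1}) (at_right 0)" by (rule ev01)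
    show "\<forall>eh et. eh \<in> {0<..1} \<longrightarrow> et \<in> {0<..1} \<longrightarrow> (case (eh, et) of (eh, et) \<Rightarrow> transformed_sc (Uh eh ** Ut et) c i' j' k' =
      transformed_sc (Ut et) ch i' j' k' + (\<Sum>q\<in>UNIV. g q et * d q eh))"
    proof (intro allI impI)
      fix eh et :: real assume h: "eh \<in> {0<..1}" "et \<in> {0<..1}"
      have "transformed_sc (Uh eh ** Ut et) c i' j' k' =
        (\<Sum>i''\<in>UNIV. \<Sum>j''\<in>UNIV. \<Sum>k''\<in>UNIV.
          Ut et $ i'' $ i' * Ut et $ j'' $ j' * matrix_inv (Ut et) $ k' $ k'' * transformed_sc (Uh eh) c i'' j'' k'')"
        using h invh invt by (intro compose_sc) auto
      also have "\<dots> = (\<Sum>q\<in>UNIV. g q et * (ch (fst q) (fst (snd q)) (snd (snd q)) + d q eh))"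
        unfolding sum3 by (simp add: g_def d_def case_prod_unfold)
      also have "\<dots> = transformed_sc (Ut et) ch i' j' k' + (\<Sum>q\<in>UNIV. g q et * d q eh)"
        unfolding transformed_sc_def sum3 by (simp add: g_def case_prod_unfold distrib_left sum.distrib)
      finally show "case (eh, et) of (eh, et) \<Rightarrow> transformed_sc (Uh eh ** Ut et) c i' j' k' =
      transformed_sc (Ut et) ch i' j' k' + (\<Sum>q\<in>UNIV. g q et * d q eh)" by simp
    qed
  qed
  have l1: "((\<lambda>(eh, et). transformed_sc (Ut et) ch i' j' k') \<longlongrightarrow> ct i' j' k') ?F"
  proof -
    have "((\<lambda>p. transformed_sc (Ut (snd p)) ch i' j' k') \<longlongrightarrow> ct i' j' k') ?F"
      using limt filterlim_snd by (rule filterlim_compose)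
    thus ?thesis by (simp add: case_prod_unfold)
  qed
  have l2: "((\<lambda>(eh, et). \<Sum>q\<in>UNIV. g q et * d q eh) \<longlongrightarrow> 0) ?F"
  proof (rule tendsto_sum_prod_zero)
    fix q :: "'n\<times>'n\<times>'n"
    show "Bfun (g q) (at_right 0)" unfolding g_def using assms(3) by simp
    show "(d q \<longlongrightarrow> 0) (at_right 0)" unfolding d_def
      using limh[of "fst q" "fst (snd q)" "snd (snd q)"] by (simp add: tendsto_Zfun_iff)
  qed simp
  have "((\<lambda>(eh, et). transformed_sc (Ut et) ch i' j' k' + (\<Sum>q\<in>UNIV. g q et * d q eh)) \<longlongrightarrow> ct i' j' k' + 0) ?F"
    using tendsto_add[OF l1 l2] by (simp add: case_prod_unfold)
  hence "((\<lambda>(eh, et). transformed_sc (Ut et) ch i' j' k' + (\<Sum>q\<in>UNIV. g q et * d q eh)) \<longlongrightarrow> ct i' j' k') ?F"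
    by simp
  thus "((\<lambda>(eh, et). transformed_sc (Uh eh ** Ut et) c i' j' k') \<longlongrightarrow> ct i' j' k') ?F"
    by (rule Lim_transform_eventually) (use evF in \<open>auto elim: eventually_mono\<close>)
qed

end
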